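(* Let $n,p \in \mathbb{N}$, $S_1,\dots,S_p \in \mathbb{N}^n\setminus\{0\}$, $C = \frac{1}{2}\cdot 1_{n\times 1}$, $\rho > 0$, $R = \sqrt{\rho^2 + \frac{n}{4}}$ and $C_i = C - \rho\cdot\frac{S_i}{\|S_i\|}$ for $i \in \{1,\dots,p\}$. For $x \in \{0,1\}^n$: (a) if $x$ satisfies $-\frac{\epsilon}{2} \le \frac{S_i^T}{\|S_i\|}(x - C) \le \frac{\epsilon}{2}$ for all $i \in \{1,\dots,p\}$, then $x$ satisfies $-\frac{\delta}{2} \le \|x - C_i\| - R \le \frac{\delta}{2}$ for all $i$, with $\delta = 2\left(\frac{\epsilon}{2} + \frac{n}{8\rho}\right)$; (b) conversely, if $x$ satisfies $-\frac{\delta}{2} \le \|x - C_i\| - R \le \frac{\delta}{2}$ for all $i \in \{1,\dots,p\}$, then $x$ satisfies $-\frac{\epsilon}{2} \le \frac{S_i^T}{\|S_i\|}(x - C) \le \frac{\epsilon}{2}$ for all $i$, with $\epsilon = 2\left(\frac{\delta}{2} + \frac{n}{8\rho}\right)$.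
   Context: $1_{n\times 1}$ denotes the all-ones vector in $\mathbb{R}^n$ and $\|\cdot\|$ the Euclidean norm. *)

theory Defs
  imports "HOL-Analysis.Analysis"
begin

definition ctr :: "real ^ 'n" where
  "ctr = (\<chi> j. 1 / 2)"

definition radius :: "real \<Rightarrow> 'n itself \<Rightarrow> real" where
  "radius \<rho> _ = sqrt (\<rho>\<^sup>2 + real CARD('n) / 4)"

definition ctr_i :: "real \<Rightarrow> real ^ 'n \<Rightarrow> real ^ 'n" where
  "ctr_i \<rho> s = ctr - \<rho> *\<^sub>R (inverse (norm s) *\<^sub>R s)"

definition binary_vec :: "real ^ 'n \<Rightarrow> bool" where
  "binary_vec x \<longleftrightarrow> (\<forall>j. x $ j \<in> {0, 1})"

definition nat_vec :: "real ^ 'n \<Rightarrow> bool" where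
  "nat_vec s \<longleftrightarrow> (\<forall>j. s $ j \<in> \<nat>)"

end

theory Submission
  imports Defs
begin


lemma key_a:
  fixes \<rho> N R t k e :: real
  assumes "\<rho> > 0" "N \<ge> 0" "R \<ge> \<rho>" "N^2 = R^2 + 2*\<rho>*t" "N \<ge> \<rho> + t"
    "R^2 = \<rho>^2 + 2*\<rho>*k" "k \<ge> 0" "\<bar>t\<bar> \<le> e"
  shows "\<bar>N - R\<bar> \<le> e + k"
proof -
  have Rk: "R \<le> \<rho> + k"
  proof -
    have "R^2 \<le> (\<rho>+k)^2" using assms by (simp add: power2_eq_square algebra_simps)
    moreover have "0 \<le> \<rho>+k" using assms by linarith
    ultimately show ?thesis by (rule power2_le_imp_le)
  qed
  have lo: "N - R \<ge> -(e+k)" using Rk assms by linarith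
  have "N^2 \<le> (R + \<bar>t\<bar>)^2"
  proof -
    have "2*\<rho>*t \<le> 2*R*\<bar>t\<bar>" using assms
      by (smt (verit) mult_mono abs_ge_self abs_ge_zero mult_left_mono)
    moreover have "(R+\<bar>t\<bar>)^2 = R^2 + 2*R*\<bar>t\<bar> + \<bar>t\<bar>^2" by (simp add: power2_sum)
    moreover have "\<bar>t\<bar>^2 \<ge> 0" by simp
    ultimately show ?thesis using assms(4) by linarith
  qed
  moreover have "0 \<le> R + \<bar>t\<bar>" using assms by simp
  ultimately have "N \<le> R + \<bar>t\<bar>" by (rule power2_le_imp_le)
  thus ?thesis using lo assms by linarith
qed

lemma key_b:
  fixes \<rho> N R t k e :: real
  assumes "\<rho> > 0" "N \<ge> 0" "R \<ge> \<rho>" "N^2 = R^2 + 2*\<rho>*t" "N \<ge> \<rho> + t"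
    "R^2 = \<rho>^2 + 2*\<rho>*k" "k \<ge> 0" "\<bar>N - R\<bar> \<le> e"
  shows "\<bar>t\<bar> \<le> e + k"
proof -
  have Rk: "R \<le> \<rho> + k"
  proof -
    have "R^2 \<le> (\<rho>+k)^2" using assms by (simp add: power2_eq_square algebra_simps)
    moreover have "0 \<le> \<rho>+k" using assms by linarith
    ultimately show ?thesis by (rule power2_le_imp_le)
  qed
  have up: "t \<le> e + k" using Rk assms by linarith
  have "t \<ge> -(e+k)"
  proof (cases "t \<ge> 0")
    case True thus ?thesis using assms by linarith
  next
    case False
    define d where "d = R - N"
    have d0: "d \<ge> 0"
    proof (rule ccontr)
      assume "\<not> d \<ge> 0" hence "N > R" by (simp add: d_def)
      hence "N^2 > R^2" using assms power_strict_mono[of R N 2] by simp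
      moreover have "\<rho>*t < 0" using assms(1) False by (simp add: mult_pos_neg)
      ultimately show False using assms(4) by linarith
    qed
    have eq: "2*\<rho>*(-t) = d*(2*R - d)"
      using assms(4) by (simp add: d_def power2_eq_square algebra_simps)
    have "d*(2*R - d) \<le> 2*\<rho>*d + 2*\<rho>*k"
    proof -
      have "(R-\<rho>)^2 \<le> 2*\<rho>*k"
      proof -
        have "(R-\<rho>)^2 \<le> (R-\<rho>)*(R+\<rho>)" using assms
          by (simp add: power2_eq_square mult_left_mono)
        thus ?thesis using assms(6) by (simp add: power2_eq_square algebra_simps)
      qed
      moreover have "d*(2*R-d) - 2*\<rho>*d = (R-\<rho>)^2 - (d - (R-\<rho>))^2"
        by (simp add: power2_eq_square algebra_simps)
      ultimately show ?thesis by (smt (verit) zero_le_power2)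
    qed
    hence "2*\<rho>*(-t) \<le> 2*\<rho>*(d+k)" using eq by (simp add: algebra_simps)
    hence "-t \<le> d + k" using assms(1) mult_le_cancel_left_pos[of "2*\<rho>" "-t" "d+k"] by linarith
    thus ?thesis using assms d_def by linarith
  qed
  thus ?thesis using up by linarith
qed
lemma yy:
  fixes x :: "real ^ 'n"
  assumes "binary_vec x"
  shows "(x - ctr) \<bullet> (x - ctr) = real CARD('n) / 4"
proof -
  have "\<And>j. (x - ctr) $ j * (x - ctr) $ j = 1/4"
    using assms unfolding binary_vec_def ctr_def by (auto simp: field_simps)
  note h = this
  have "(x - ctr) \<bullet> (x - ctr) = (\<Sum>j\<in>(UNIV::'n set). (1::real)/4)"
    unfolding inner_vec_def inner_real_def by (rule sum.cong[OF refl]) (use h in \<open>simp_all del: vector_minus_component\<close>)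
  thus ?thesis by simp
qed

lemma per_i:
  fixes x s :: "real ^ 'n" and \<rho> :: real
  assumes "binary_vec x" "s \<noteq> 0" "\<rho> > 0"
  defines "u \<equiv> inverse (norm s) *\<^sub>R s"
  defines "N \<equiv> norm (x - ctr_i \<rho> s)" and "t \<equiv> u \<bullet> (x - ctr)"
    and "R \<equiv> radius \<rho> TYPE('n)" and "k \<equiv> real CARD('n) / (8*\<rho>)"
  shows "N^2 = R^2 + 2*\<rho>*t" "N \<ge> \<rho> + t" "R \<ge> \<rho>" "R^2 = \<rho>^2 + 2*\<rho>*k" "k \<ge> 0" "N \<ge> 0"
proof -
  define y where "y = x - ctr"
  have uu: "u \<bullet> u = 1" using assms(2) unfolding u_def
    by (simp add: inner_commute power2_norm_eq_inner[symmetric] field_simps)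
  have nu: "norm u = 1" using uu by (simp add: norm_eq_sqrt_inner)
  have xc: "x - ctr_i \<rho> s = y + \<rho> *\<^sub>R u" unfolding y_def ctr_i_def u_def by simp
  have R2: "R^2 = \<rho>^2 + real CARD('n) / 4" unfolding R_def radius_def by simp
  show "R^2 = \<rho>^2 + 2*\<rho>*k" using R2 assms(3) unfolding k_def by (simp add: field_simps)
  show "k \<ge> 0" unfolding k_def using assms(3) by simp
  show "N \<ge> 0" unfolding N_def by simp
  show "R \<ge> \<rho>" unfolding R_def radius_def using assms(3)
    by (metis abs_of_pos add_increasing2 of_nat_0_le_iff divide_nonneg_pos real_le_rsqrt zero_less_numeral power2_eq_square order_refl less_imp_le)
  have "N^2 = y \<bullet> y + 2*\<rho>*(u \<bullet> y) + \<rho>^2 * (u \<bullet> u)"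
    unfolding N_def xc power2_norm_eq_inner
    by (simp add: inner_add_left inner_add_right inner_commute power2_eq_square algebra_simps)
  thus "N^2 = R^2 + 2*\<rho>*t" using yy[OF assms(1)] uu R2 unfolding t_def y_def by simp
  have "u \<bullet> (y + \<rho> *\<^sub>R u) \<le> norm u * norm (y + \<rho> *\<^sub>R u)" by (rule norm_cauchy_schwarz)
  thus "N \<ge> \<rho> + t" using uu nu unfolding N_def xc t_def y_def by (simp add: inner_add_right)
qed

theorem lemma4p1:
  fixes S :: "nat \<Rightarrow> real ^ 'n" and p :: nat and \<rho> :: real
  assumes S_nat: "\<forall>i\<in>{1..p}. nat_vec (S i) \<and> S i \<noteq> 0"
    and rho_pos: "\<rho> > 0"
  shows
    "(\<forall>(\<epsilon>::real) (x::real ^ 'n).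
        binary_vec x \<and>
        (\<forall>i\<in>{1..p}. - \<epsilon> / 2 \<le> (inverse (norm (S i)) *\<^sub>R S i) \<bullet> (x - ctr)
                     \<and> (inverse (norm (S i)) *\<^sub>R S i) \<bullet> (x - ctr) \<le> \<epsilon> / 2)
        \<longrightarrow> (let \<delta> = 2 * (\<epsilon> / 2 + real CARD('n) / (8 * \<rho>)) in
             \<forall>i\<in>{1..p}. - \<delta> / 2 \<le> norm (x - ctr_i \<rho> (S i)) - radius \<rho> TYPE('n)
                        \<and> norm (x - ctr_i \<rho> (S i)) - radius \<rho> TYPE('n) \<le> \<delta> / 2))
     \<and>
     (\<forall>(\<delta>::real) (x::real ^ 'n).
        binary_vec x \<and>
        (\<forall>i\<in>{1..p}. - \<delta> / 2 \<le> norm (x - ctr_i \<rho> (S i)) - radius \<rho> TYPE('n)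
                     \<and> norm (x - ctr_i \<rho> (S i)) - radius \<rho> TYPE('n) \<le> \<delta> / 2)
        \<longrightarrow> (let \<epsilon> = 2 * (\<delta> / 2 + real CARD('n) / (8 * \<rho>)) in
             \<forall>i\<in>{1..p}. - \<epsilon> / 2 \<le> (inverse (norm (S i)) *\<^sub>R S i) \<bullet> (x - ctr)
                        \<and> (inverse (norm (S i)) *\<^sub>R S i) \<bullet> (x - ctr) \<le> \<epsilon> / 2))"
  proof (intro conjI allI impI)
  fix \<epsilon> and x :: "real ^ 'n"
  assume h: "binary_vec x \<and>
        (\<forall>i\<in>{1..p}. - \<epsilon> / 2 \<le> (inverse (norm (S i)) *\<^sub>R S i) \<bullet> (x - ctr)
                     \<and> (inverse (norm (S i)) *\<^sub>R S i) \<bullet> (x - ctr) \<le> \<epsilon> / 2)"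
  show "let \<delta> = 2 * (\<epsilon> / 2 + real CARD('n) / (8 * \<rho>)) in
             \<forall>i\<in>{1..p}. - \<delta> / 2 \<le> norm (x - ctr_i \<rho> (S i)) - radius \<rho> TYPE('n)
                        \<and> norm (x - ctr_i \<rho> (S i)) - radius \<rho> TYPE('n) \<le> \<delta> / 2"
    unfolding Let_def
  proof
    fix i assume i: "i \<in> {1..p}"
    have "S i \<noteq> 0" using S_nat i by blast
    note P = per_i[OF conjunct1[OF h] this rho_pos]
    have "\<bar>(inverse (norm (S i)) *\<^sub>R S i) \<bullet> (x - ctr)\<bar> \<le> \<epsilon>/2" using bspec[OF conjunct2[OF h] i] unfolding abs_le_iff by (intro conjI; linarith)
    from key_a[OF rho_pos P(6) P(3) P(1) P(2) P(4) P(5) this]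
    show "- (2 * (\<epsilon> / 2 + real CARD('n) / (8 * \<rho>))) / 2 \<le> norm (x - ctr_i \<rho> (S i)) - radius \<rho> TYPE('n)
                        \<and> norm (x - ctr_i \<rho> (S i)) - radius \<rho> TYPE('n) \<le> (2 * (\<epsilon> / 2 + real CARD('n) / (8 * \<rho>))) / 2"
      by (simp add: abs_le_iff)
  qed
next
  fix \<delta> and x :: "real ^ 'n"
  assume h: "binary_vec x \<and>
        (\<forall>i\<in>{1..p}. - \<delta> / 2 \<le> norm (x - ctr_i \<rho> (S i)) - radius \<rho> TYPE('n)
                     \<and> norm (x - ctr_i \<rho> (S i)) - radius \<rho> TYPE('n) \<le> \<delta> / 2)"
  show "let \<epsilon> = 2 * (\<delta> / 2 + real CARD('n) / (8 * \<rho>)) in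
             \<forall>i\<in>{1..p}. - \<epsilon> / 2 \<le> (inverse (norm (S i)) *\<^sub>R S i) \<bullet> (x - ctr)
                        \<and> (inverse (norm (S i)) *\<^sub>R S i) \<bullet> (x - ctr) \<le> \<epsilon> / 2"
    unfolding Let_def
  proof
    fix i assume i: "i \<in> {1..p}"
    have "S i \<noteq> 0" using S_nat i by blast
    note P = per_i[OF conjunct1[OF h] this rho_pos]
    have "\<bar>norm (x - ctr_i \<rho> (S i)) - radius \<rho> TYPE('n)\<bar> \<le> \<delta>/2" using bspec[OF conjunct2[OF h] i] unfolding abs_le_iff by (intro conjI; linarith)
    from key_b[OF rho_pos P(6) P(3) P(1) P(2) P(4) P(5) this]
    show "- (2 * (\<delta> / 2 + real CARD('n) / (8 * \<rho>))) / 2 \<le> (inverse (norm (S i)) *\<^sub>R S i) \<bullet> (x - ctr)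
                        \<and> (inverse (norm (S i)) *\<^sub>R S i) \<bullet> (x - ctr) \<le> (2 * (\<delta> / 2 + real CARD('n) / (8 * \<rho>))) / 2"
      by (simp add: abs_le_iff)
  qed
qed

end
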